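(* Let $n\ge3$, $I$ a finite nonempty set, $G=\mathrm{H}_n^{(I)}$ with projections $\pi_i\colon G\to\mathrm{H}_n$, and $H\le G$. If $HM(G)=G$ and $\pi_i(H)=\mathrm{H}_n$ for all $i\in I$, then $H=G$.
   Context: $M(G)$ is the intersection of all maximal normal subgroups of a finite group $G$. $V=\mathbb{F}_2^n$, $\mathrm{H}_n=V\rtimes S_n$ with $S_n$ permuting coordinates; total sign $\chi(x\tau)=(-1)^{\sum_ix_i}$; $\mathrm{H}_n^{(I)}=\{(g_i)_{i\in I}\in\mathrm{H}_n^I:\chi(g_i)=\chi(g_j)\ \forall i,j\in I\}$. *)

theory Defs
  imports "HOL-Algebra.Algebra" "HOL-Combinatorics.Permutations"
begin

text \<open>The hyperoctahedral group H_n = F_2^n semidirect S_n, realised concretely as pairs (x, s)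
  with x a 0/1-vector supported on {..<n} (as a boolean function) and s a permutation of {..<n}.
  Multiplication (x,s)(y,t) = (x o t + y, s o t) (addition in F_2 = xor).\<close>

definition Hn_carrier :: "nat \<Rightarrow> ((nat \<Rightarrow> bool) \<times> (nat \<Rightarrow> nat)) set" where
  "Hn_carrier n = {(x, s). (\<forall>i. n \<le> i \<longrightarrow> \<not> x i) \<and> s permutes {..<n}}"

definition Hn_mult :: "(nat \<Rightarrow> bool) \<times> (nat \<Rightarrow> nat) \<Rightarrow> (nat \<Rightarrow> bool) \<times> (nat \<Rightarrow> nat) \<Rightarrow> (nat \<Rightarrow> bool) \<times> (nat \<Rightarrow> nat)" where
  "Hn_mult g h = (\<lambda>i. fst g (snd h i) \<noteq> fst h i, snd g \<circ> snd h)"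

definition Hn :: "nat \<Rightarrow> ((nat \<Rightarrow> bool) \<times> (nat \<Rightarrow> nat)) monoid" where
  "Hn n = \<lparr> partial_object.carrier = Hn_carrier n, monoid.mult = Hn_mult, monoid.one = (\<lambda>_. False, id) \<rparr>"

text \<open>Total sign: True encodes +1 (even number of nonzero coordinates), False encodes -1.\<close>
definition chi :: "nat \<Rightarrow> (nat \<Rightarrow> bool) \<times> (nat \<Rightarrow> nat) \<Rightarrow> bool" where
  "chi n g = even (card {i. i < n \<and> fst g i})"

definition HnI :: "nat \<Rightarrow> 'a set \<Rightarrow> ('a \<Rightarrow> (nat \<Rightarrow> bool) \<times> (nat \<Rightarrow> nat)) monoid" where
  "HnI n I = \<lparr> partial_object.carrier = {g. g \<in> extensional I \<and> (\<forall>i\<in>I. g i \<in> carrier (Hn n))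
                             \<and> (\<forall>i\<in>I. \<forall>j\<in>I. chi n (g i) = chi n (g j))},
              monoid.mult = (\<lambda>g h. \<lambda>i\<in>I. g i \<otimes>\<^bsub>Hn n\<^esub> h i),
              monoid.one = (\<lambda>i\<in>I. \<one>\<^bsub>Hn n\<^esub>) \<rparr>"

definition max_normal :: "'g set \<Rightarrow> ('g, 'b) monoid_scheme \<Rightarrow> bool" where
  "max_normal N G \<longleftrightarrow> N \<lhd> G \<and> N \<noteq> carrier G \<and>
     (\<forall>K. K \<lhd> G \<longrightarrow> N \<subseteq> K \<longrightarrow> K = N \<or> K = carrier G)"

text \<open>M(G): intersection of all maximal normal subgroups (= carrier G if there are none).\<close>
definition Mgrp :: "('g, 'b) monoid_scheme \<Rightarrow> 'g set" where
  "Mgrp G = {g \<in> carrier G. \<forall>N. max_normal N G \<longrightarrow> g \<in> N}"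

end

theory Submission
  imports Defs
begin


abbreviation pinv :: "(nat \<Rightarrow> nat) \<Rightarrow> nat \<Rightarrow> nat" where "pinv f \<equiv> inv_into UNIV f"

lemma card_symdiff_parity:
  assumes "finite A" "finite B"
  shows "card A + card B = card ((A-B)\<union>(B-A)) + 2 * card (A\<inter>B)"
proof -
  have "A \<union> B = ((A-B)\<union>(B-A)) \<union> (A\<inter>B)" by blast
  moreover have "((A-B)\<union>(B-A)) \<inter> (A\<inter>B) = {}" by blast
  ultimately have "card (A\<union>B) = card ((A-B)\<union>(B-A)) + card (A\<inter>B)"
    using assms by (metis card_Un_disjoint finite_Int finite_Un finite_Diff)
  with card_Un_Int[OF assms] show ?thesis by simp
qed

lemma Hn_carrier_iff: "(x,s) \<in> carrier (Hn n) \<longleftrightarrow> (\<forall>i. n \<le> i \<longrightarrow> \<not> x i) \<and> s permutes {..<n}"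
  by (simp add: Hn_def Hn_carrier_def)

lemma Hn_mult_simp[simp]: "(x,s) \<otimes>\<^bsub>Hn n\<^esub> (y,t) = (\<lambda>i. x (t i) \<noteq> y i, s \<circ> t)"
  by (simp add: Hn_def Hn_mult_def)

lemma Hn_one[simp]: "\<one>\<^bsub>Hn n\<^esub> = (\<lambda>_. False, id)"
  by (simp add: Hn_def)

lemma Hn_group: "group (Hn n)"
proof (rule groupI)
  fix a b assume a: "a \<in> carrier (Hn n)" and b: "b \<in> carrier (Hn n)"
  obtain x s y t where [simp]: "a = (x,s)" "b = (y,t)" by fastforce
  from a b show "a \<otimes>\<^bsub>Hn n\<^esub> b \<in> carrier (Hn n)"
    by (auto simp: Hn_carrier_iff permutes_compose permutes_not_in)
next
  show "\<one>\<^bsub>Hn n\<^esub> \<in> carrier (Hn n)" by (simp add: Hn_carrier_iff permutes_id)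
next
  fix a b c assume "a \<in> carrier (Hn n)" "b \<in> carrier (Hn n)" "c \<in> carrier (Hn n)"
  obtain x s y t z u where [simp]: "a = (x,s)" "b = (y,t)" "c = (z,u)" by (metis surj_pair)
  show "a \<otimes>\<^bsub>Hn n\<^esub> b \<otimes>\<^bsub>Hn n\<^esub> c = a \<otimes>\<^bsub>Hn n\<^esub> (b \<otimes>\<^bsub>Hn n\<^esub> c)"
    by (auto simp: fun_eq_iff)
next
  fix a assume "a \<in> carrier (Hn n)"
  then obtain x s where [simp]: "a = (x,s)" and x: "\<forall>i. n \<le> i \<longrightarrow> \<not> x i" and s: "s permutes {..<n}"
    by (metis Hn_carrier_iff surj_pair)
  show "\<one>\<^bsub>Hn n\<^esub> \<otimes>\<^bsub>Hn n\<^esub> a = a" by simp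
  have "(x \<circ> pinv s, pinv s) \<in> carrier (Hn n)"
    using x s by (auto simp: Hn_carrier_iff permutes_inv permutes_not_in[OF permutes_inv[OF s]])
  moreover have "(x \<circ> pinv s, pinv s) \<otimes>\<^bsub>Hn n\<^esub> a = \<one>\<^bsub>Hn n\<^esub>"
    using s by (simp add: permutes_inverses permutes_inv_o)
  ultimately show "\<exists>y\<in>carrier (Hn n). y \<otimes>\<^bsub>Hn n\<^esub> a = \<one>\<^bsub>Hn n\<^esub>" by blast
qed

lemma Hn_inv:
  assumes "(x,s) \<in> carrier (Hn n)"
  shows "inv\<^bsub>Hn n\<^esub> (x,s) = (x \<circ> pinv s, pinv s)"
proof -
  interpret group "Hn n" by (rule Hn_group)
  from assms have x: "\<forall>i. n \<le> i \<longrightarrow> \<not> x i" and s: "s permutes {..<n}" by (auto simp: Hn_carrier_iff)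
  have c: "(x \<circ> pinv s, pinv s) \<in> carrier (Hn n)"
    using x s by (auto simp: Hn_carrier_iff permutes_inv permutes_not_in[OF permutes_inv[OF s]])
  have "(x \<circ> pinv s, pinv s) \<otimes>\<^bsub>Hn n\<^esub> (x,s) = \<one>\<^bsub>Hn n\<^esub>"
    using s by (simp add: permutes_inverses permutes_inv_o)
  thus ?thesis using inv_equality[OF _ assms c] by simp
qed

lemma chi_simp: "chi n (x,s) = even (card {i. i < n \<and> x i})"
  by (simp add: chi_def)

lemma chi_mult:
  assumes "a \<in> carrier (Hn n)" "b \<in> carrier (Hn n)"
  shows "chi n (a \<otimes>\<^bsub>Hn n\<^esub> b) = (chi n a = chi n b)"
proof -
  obtain x s y t where [simp]: "a = (x,s)" "b = (y,t)" by fastforce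
  have t: "t permutes {..<n}" using assms by (simp add: Hn_carrier_iff)
  define A where "A = {i. i < n \<and> x (t i)}"
  define B where "B = {i. i < n \<and> y i}"
  have "t ` A = {i. i < n \<and> x i}"
  proof (intro equalityI subsetI)
    fix j assume "j \<in> t ` A"
    then obtain i where "i \<in> A" "j = t i" by blast
    then show "j \<in> {i. i < n \<and> x i}" using permutes_in_image[OF t, of i] by (auto simp: A_def)
  next
    fix j assume j: "j \<in> {i. i < n \<and> x i}"
    have "pinv t j < n" using j permutes_in_image[OF permutes_inv[OF t], of j] by auto
    moreover have "t (pinv t j) = j" using permutes_inverses(1)[OF t] by simp
    ultimately show "j \<in> t ` A" using j unfolding A_def by (metis (mono_tags, lifting) image_eqI mem_Collect_eq)
  qed
  moreover have "inj_on t A" using t by (meson permutes_inj inj_on_subset subset_UNIV)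
  ultimately have cA: "card A = card {i. i < n \<and> x i}" by (metis card_image)
  have fA: "finite A" "finite B" by (auto simp: A_def B_def)
  have eq: "{i. i < n \<and> (x (t i) \<noteq> y i)} = (A-B)\<union>(B-A)" by (auto simp: A_def B_def)
  have e: "chi n (a \<otimes>\<^bsub>Hn n\<^esub> b) = even (card ((A-B)\<union>(B-A)))"
    unfolding chi_def by (simp only: \<open>a = (x,s)\<close> \<open>b = (y,t)\<close> Hn_mult_simp fst_conv eq)
  have ar: "\<And>p q r k::nat. p + q = r + 2 * k \<Longrightarrow> even r = (even p = even q)" by presburger
  show ?thesis using ar[OF card_symdiff_parity[OF fA]] cA e
    by (simp add: chi_simp B_def)
qed



lemma chi_one[simp]: "chi n (\<lambda>_. False, id) = True" by (simp add: chi_def)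

lemma chi_inv: assumes "a \<in> carrier (Hn n)" shows "chi n (inv\<^bsub>Hn n\<^esub> a) = chi n a"
proof -
  interpret group "Hn n" by (rule Hn_group)
  have "chi n (a \<otimes>\<^bsub>Hn n\<^esub> inv\<^bsub>Hn n\<^esub> a) = True" using assms by simp
  thus ?thesis using chi_mult[OF assms inv_closed[OF assms]] by auto
qed

lemma HnI_carrier: "g \<in> carrier (HnI n I) \<longleftrightarrow> g \<in> extensional I \<and> (\<forall>i\<in>I. g i \<in> carrier (Hn n))
   \<and> (\<forall>i\<in>I. \<forall>j\<in>I. chi n (g i) = chi n (g j))"
  by (simp add: HnI_def)

lemma HnI_carrierD:
  assumes "g \<in> carrier (HnI n I)"
  shows "g \<in> extensional I" "\<And>i. i \<in> I \<Longrightarrow> g i \<in> carrier (Hn n)"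
    "\<And>i j. i \<in> I \<Longrightarrow> j \<in> I \<Longrightarrow> chi n (g i) = chi n (g j)"
  using assms unfolding HnI_carrier by blast+

lemma HnI_mult: "g \<otimes>\<^bsub>HnI n I\<^esub> h = (\<lambda>i\<in>I. g i \<otimes>\<^bsub>Hn n\<^esub> h i)"
  by (simp add: HnI_def)

lemma HnI_one: "\<one>\<^bsub>HnI n I\<^esub> = (\<lambda>i\<in>I. (\<lambda>_. False, id))"
  by (simp add: HnI_def)

lemma HnI_group: "group (HnI n I)"
proof -
  interpret H: group "Hn n" by (rule Hn_group)
  show ?thesis
  proof (rule groupI)
    fix x y assume xc: "x \<in> carrier (HnI n I)" and yc: "y \<in> carrier (HnI n I)"
    have x: "x \<in> extensional I" "\<And>i. i\<in>I \<Longrightarrow> x i \<in> carrier (Hn n)" "\<And>i j. i\<in>I \<Longrightarrow> j\<in>I \<Longrightarrow> chi n (x i) = chi n (x j)"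
      and y: "y \<in> extensional I" "\<And>i. i\<in>I \<Longrightarrow> y i \<in> carrier (Hn n)" "\<And>i j. i\<in>I \<Longrightarrow> j\<in>I \<Longrightarrow> chi n (y i) = chi n (y j)"
      using HnI_carrierD[OF xc] HnI_carrierD[OF yc] by blast+
    show "x \<otimes>\<^bsub>HnI n I\<^esub> y \<in> carrier (HnI n I)"
      unfolding HnI_carrier HnI_mult
    proof (intro conjI ballI)
      fix i j assume "i \<in> I" "j \<in> I"
      then show "chi n ((\<lambda>i\<in>I. x i \<otimes>\<^bsub>Hn n\<^esub> y i) i) = chi n ((\<lambda>i\<in>I. x i \<otimes>\<^bsub>Hn n\<^esub> y i) j)"
        using chi_mult[OF x(2) y(2), of i] chi_mult[OF x(2) y(2), of j] x(3)[of i j] y(3)[of i j] by simp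
    qed (use x(1,2) y(1,2) H.m_closed in \<open>auto simp del: Hn_mult_simp\<close>)
  next
    show "\<one>\<^bsub>HnI n I\<^esub> \<in> carrier (HnI n I)"
      using H.one_closed by (auto simp: HnI_carrier HnI_one)
  next
    fix x y z assume xc: "x \<in> carrier (HnI n I)" and yc: "y \<in> carrier (HnI n I)" and zc: "z \<in> carrier (HnI n I)"
    show "x \<otimes>\<^bsub>HnI n I\<^esub> y \<otimes>\<^bsub>HnI n I\<^esub> z = x \<otimes>\<^bsub>HnI n I\<^esub> (y \<otimes>\<^bsub>HnI n I\<^esub> z)"
      using HnI_carrierD(2)[OF xc] HnI_carrierD(2)[OF yc] HnI_carrierD(2)[OF zc] H.m_assoc by (auto simp: HnI_mult fun_eq_iff restrict_def simp del: Hn_mult_simp)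
  next
    fix x assume x: "x \<in> carrier (HnI n I)"
    show "\<one>\<^bsub>HnI n I\<^esub> \<otimes>\<^bsub>HnI n I\<^esub> x = x"
      using H.l_one[simplified] HnI_carrierD(1,2)[OF x] by (auto simp: HnI_mult HnI_one fun_eq_iff extensional_def)
    have "(\<lambda>i\<in>I. inv\<^bsub>Hn n\<^esub> (x i)) \<in> carrier (HnI n I)"
    proof (unfold HnI_carrier, intro conjI ballI)
      fix i j assume i: "i \<in> I" and j: "j \<in> I"
      show "chi n ((\<lambda>i\<in>I. inv\<^bsub>Hn n\<^esub> (x i)) i) = chi n ((\<lambda>i\<in>I. inv\<^bsub>Hn n\<^esub> (x i)) j)"
        using i j by (simp add: chi_inv HnI_carrierD(2)[OF x] HnI_carrierD(3)[OF x i j])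
    qed (use HnI_carrierD(2)[OF x] in auto)
    moreover have "(\<lambda>i\<in>I. inv\<^bsub>Hn n\<^esub> (x i)) \<otimes>\<^bsub>HnI n I\<^esub> x = \<one>\<^bsub>HnI n I\<^esub>"
      using HnI_carrierD(2)[OF x] H.l_inv[simplified] by (auto simp: HnI_mult HnI_one fun_eq_iff)
    ultimately show "\<exists>y\<in>carrier (HnI n I). y \<otimes>\<^bsub>HnI n I\<^esub> x = \<one>\<^bsub>HnI n I\<^esub>" by blast
  qed
qed

lemma HnI_inv_app:
  assumes "g \<in> carrier (HnI n I)" "i \<in> I"
  shows "(inv\<^bsub>HnI n I\<^esub> g) i = inv\<^bsub>Hn n\<^esub> (g i)"
proof -
  interpret H: group "Hn n" by (rule Hn_group)
  interpret G: group "HnI n I" by (rule HnI_group)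
  have "(inv\<^bsub>HnI n I\<^esub> g \<otimes>\<^bsub>HnI n I\<^esub> g) i = \<one>\<^bsub>HnI n I\<^esub> i" using assms by simp
  hence "(inv\<^bsub>HnI n I\<^esub> g) i \<otimes>\<^bsub>Hn n\<^esub> g i = \<one>\<^bsub>Hn n\<^esub>" using assms(2) by (simp add: HnI_mult HnI_one)
  moreover have "(inv\<^bsub>HnI n I\<^esub> g) i \<in> carrier (Hn n)" using G.inv_closed[OF assms(1)] assms(2) by (simp add: HnI_carrier)
  moreover have "g i \<in> carrier (Hn n)" using assms by (simp add: HnI_carrier)
  ultimately show ?thesis by (metis H.inv_equality)
qed



lemma conj_transpose:
  assumes "p permutes S"
  shows "p \<circ> Transposition.transpose a b \<circ> pinv p = Transposition.transpose (p a) (p b)"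
proof
  fix x
  have inj: "\<And>u v. p u = p v \<Longrightarrow> u = v" using permutes_inj[OF assms] by (meson injD)
  have e: "p (pinv p x) = x" using permutes_inverses(1)[OF assms] .
  have k: "\<And>y. p (Transposition.transpose a b y) = Transposition.transpose (p a) (p b) (p y)"
    unfolding Transposition.transpose_def using inj by auto
  show "(p \<circ> Transposition.transpose a b \<circ> pinv p) x = Transposition.transpose (p a) (p b) x"
    using k[of "pinv p x"] e by simp
qed

lemma perm_permutation: "p permutes {..<(n::nat)} \<Longrightarrow> permutation p"
  using permutation_permutes by blast

lemma supp_sub: "p permutes {..<(n::nat)} \<Longrightarrow> {x. p x \<noteq> x} \<subseteq> {..<n}"
  using permutes_not_in by fastforce

lemma transpose_in_P:
  fixes P :: "(nat \<Rightarrow> nat) set"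
  assumes sub: "\<And>p. p \<in> P \<Longrightarrow> p permutes {..<n}"
    and comp: "\<And>p q. p \<in> P \<Longrightarrow> q \<in> P \<Longrightarrow> p \<circ> q \<in> P"
    and invc: "\<And>p. p \<in> P \<Longrightarrow> pinv p \<in> P"
    and conj: "\<And>p t. p \<in> P \<Longrightarrow> t permutes {..<n} \<Longrightarrow> t \<circ> p \<circ> pinv t \<in> P"
  shows "s \<in> P \<Longrightarrow> \<not> evenperm s \<Longrightarrow> \<exists>a b. a \<noteq> b \<and> Transposition.transpose a b \<in> P"
proof (induction "card {x. s x \<noteq> x}" arbitrary: s rule: less_induct)
  case less
  note sP = less.prems(1) and odd = less.prems(2)
  have sperm: "s permutes {..<n}" using sub[OF sP] .
  define S where "S = {x. s x \<noteq> x}"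
  have Ssub: "S \<subseteq> {..<n}" using supp_sub[OF sperm] by (simp add: S_def)
  have finS: "finite S" using Ssub finite_subset by blast
  have sinj: "\<And>u v. s u = s v \<Longrightarrow> u = v" using permutes_inj[OF sperm] by (meson injD)
  have sinS: "\<And>x. x \<in> S \<Longrightarrow> s x \<in> S" unfolding S_def using sinj by auto
  have trP: "\<And>a b. a < n \<Longrightarrow> b < n \<Longrightarrow> Transposition.transpose a b permutes {..<n}"
    by (simp add: permutes_swap_id)
  have cP: "\<And>a b. a < n \<Longrightarrow> b < n \<Longrightarrow>
     Transposition.transpose (s a) (s b) \<circ> Transposition.transpose a b \<in> P"
  proof -
    fix a b assume a: "a < n" and b: "b < n"
    have "s \<circ> Transposition.transpose a b \<circ> pinv s = Transposition.transpose (s a) (s b)"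
      by (rule conj_transpose[OF sperm])
    moreover have "Transposition.transpose a b \<circ> pinv s \<circ> pinv (Transposition.transpose a b) \<in> P"
      using conj[OF invc[OF sP] trP[OF a b]] .
    hence "Transposition.transpose a b \<circ> pinv s \<circ> Transposition.transpose a b \<in> P" by simp
    hence "s \<circ> (Transposition.transpose a b \<circ> pinv s \<circ> Transposition.transpose a b) \<in> P"
      by (rule comp[OF sP])
    ultimately show "Transposition.transpose (s a) (s b) \<circ> Transposition.transpose a b \<in> P"
      by (simp add: o_assoc)
  qed
  have idne: "s \<noteq> id" using odd by auto
  then obtain a0 where "s a0 \<noteq> a0" by (metis eq_id_iff)
  hence a0S: "a0 \<in> S" by (simp add: S_def)
  \<comment> \<open>reduction: produce a smaller odd element\<close>
  have reduce: "\<And>w. w \<in> P \<Longrightarrow> evenperm w \<Longrightarrow> permutation w \<Longrightarrow> (\<And>x. x \<notin> S \<Longrightarrow> w x = x) \<Longrightarrow> (\<exists>y\<in>S. s (w y) = y)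
     \<Longrightarrow> \<exists>a b. a \<noteq> b \<and> Transposition.transpose a b \<in> P"
  proof -
    fix w assume wP: "w \<in> P" and we: "evenperm w" and wp: "permutation w"
      and wS: "\<And>x. x \<notin> S \<Longrightarrow> w x = x" and ex: "\<exists>y\<in>S. s (w y) = y"
    obtain y where yS: "y \<in> S" and sy: "s (w y) = y" using ex by blast
    have sub': "{x. (s \<circ> w) x \<noteq> x} \<subseteq> S - {y}"
    proof
      fix x assume "x \<in> {x. (s \<circ> w) x \<noteq> x}"
      hence "s (w x) \<noteq> x" by simp
      moreover have "x \<in> S" proof (rule ccontr)
        assume "x \<notin> S" then have "w x = x" "s x = x" using wS by (auto simp: S_def)
        with \<open>s (w x) \<noteq> x\<close> show False by simp
      qed
      ultimately show "x \<in> S - {y}" using sy by auto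
    qed
    have "card {x. (s \<circ> w) x \<noteq> x} < card S"
    proof (rule psubset_card_mono[OF finS])
      show "{x. (s \<circ> w) x \<noteq> x} \<subset> S" using sub' yS by blast
    qed
    moreover have "s \<circ> w \<in> P" using comp[OF sP wP] .
    moreover have "\<not> evenperm (s \<circ> w)" using evenperm_comp[OF perm_permutation[OF sperm] wp] odd we by simp
    ultimately show "\<exists>a b. a \<noteq> b \<and> Transposition.transpose a b \<in> P"
      using less.hyps S_def by blast
  qed
  show ?case
  proof (cases "\<exists>a\<in>S. s (s a) \<noteq> a")
    case True
    then obtain a where aS: "a \<in> S" and ssa: "s (s a) \<noteq> a" by blast
    define b where "b = s a"
    define c where "c = s b"
    have ab: "a \<noteq> b" using aS by (simp add: S_def b_def)
    have bS: "b \<in> S" using sinS[OF aS] b_def by simp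
    have cS: "c \<in> S" using sinS[OF bS] c_def by simp
    have ac: "a \<noteq> c" using ssa by (simp add: b_def c_def)
    have bc: "b \<noteq> c" using bS by (simp add: S_def c_def)
    have an: "a < n" "b < n" using aS bS Ssub by auto
    define w where "w = Transposition.transpose b c \<circ> Transposition.transpose a b"
    have wP: "w \<in> P" using cP[OF an] by (simp add: w_def b_def c_def)
    have wp: "permutation w" unfolding w_def by (simp add: permutation_compose permutation_swap_id)
    have we: "evenperm w" unfolding w_def
      by (simp add: evenperm_comp permutation_swap_id evenperm_swap ab bc)
    show ?thesis
    proof (rule reduce[OF wP we wp])
      fix x assume "x \<notin> S" then show "w x = x" using aS bS cS unfolding w_def
        by (metis comp_apply transpose_apply_other)
    next
      have "w b = a" unfolding w_def using ab ac by simp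
      then have "s (w b) = b" using b_def by simp
      then show "\<exists>y\<in>S. s (w y) = y" using bS by blast
    qed
  next
    case False
    hence inv2: "\<And>x. x \<in> S \<Longrightarrow> s (s x) = x" by blast
    define a where "a = a0"
    define b where "b = s a"
    have aS: "a \<in> S" using a0S a_def by simp
    have bS: "b \<in> S" using sinS[OF aS] b_def by simp
    have sb: "s b = a" using inv2[OF aS] b_def by simp
    have ab: "a \<noteq> b" using aS by (simp add: S_def b_def)
    show ?thesis
    proof (cases "S \<subseteq> {a,b}")
      case True
      have "s = Transposition.transpose a b"
      proof
        fix x show "s x = Transposition.transpose a b x"
        proof (cases "x = a \<or> x = b")
          case True then show ?thesis using b_def sb by auto
        next
          case False then have "x \<notin> S" using \<open>S \<subseteq> {a,b}\<close> by auto
          then show ?thesis using False by (simp add: S_def)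
        qed
      qed
      then show ?thesis using sP ab by blast
    next
      case False
      then obtain c where cS: "c \<in> S" and ca: "c \<noteq> a" and cb: "c \<noteq> b" by blast
      define d where "d = s c"
      have dS: "d \<in> S" using sinS[OF cS] d_def by simp
      have sd: "s d = c" using inv2[OF cS] d_def by simp
      have cd: "c \<noteq> d" using cS by (simp add: S_def d_def)
      have da: "d \<noteq> a" using sinj sd sb cb d_def b_def by metis
      have db: "d \<noteq> b" using sinj sd sb ca d_def b_def by metis
      have an: "a < n" "b < n" "c < n" "d < n" using aS bS cS dS Ssub by auto
      have u: "Transposition.transpose b d \<circ> Transposition.transpose a c \<in> P"
        using cP[OF an(1) an(3)] by (simp add: b_def d_def)
      have "Transposition.transpose a b \<circ> (Transposition.transpose b d \<circ> Transposition.transpose a c)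
          \<circ> pinv (Transposition.transpose a b) \<in> P"
        using conj[OF u trP[OF an(1,2)]] .
      moreover have "Transposition.transpose a b \<circ> (Transposition.transpose b d \<circ> Transposition.transpose a c)
          \<circ> pinv (Transposition.transpose a b) = Transposition.transpose a d \<circ> Transposition.transpose b c"
        using ab ca cb da db cd
        by (auto simp: fun_eq_iff Transposition.transpose_def)
      ultimately have u': "Transposition.transpose a d \<circ> Transposition.transpose b c \<in> P"
        by simp
      define w where "w = Transposition.transpose a b \<circ> Transposition.transpose c d"
      have wP: "w \<in> P"
      proof -
        have "(Transposition.transpose b d \<circ> Transposition.transpose a c) \<circ>
            (Transposition.transpose a d \<circ> Transposition.transpose b c) = w"
          using ab ca cb da db cd unfolding w_def
          by (auto simp: fun_eq_iff Transposition.transpose_def)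
        with comp[OF u u'] show ?thesis by simp
      qed
      have wp: "permutation w" unfolding w_def by (simp add: permutation_compose permutation_swap_id)
      have we: "evenperm w" unfolding w_def
        by (simp add: evenperm_comp permutation_swap_id evenperm_swap ab cd)
      show ?thesis
      proof (rule reduce[OF wP we wp])
        fix x assume "x \<notin> S" then show "w x = x" using aS bS cS dS unfolding w_def
          by (metis comp_apply transpose_apply_other)
      next
        have "w a = b" unfolding w_def using ca da by simp
        then show "\<exists>y\<in>S. s (w y) = y" using aS sb by auto
      qed
    qed
  qed
qed

lemma all_in_P:
  fixes P :: "(nat \<Rightarrow> nat) set"
  assumes sub: "\<And>p. p \<in> P \<Longrightarrow> p permutes {..<n}"
    and comp: "\<And>p q. p \<in> P \<Longrightarrow> q \<in> P \<Longrightarrow> p \<circ> q \<in> P"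
    and invc: "\<And>p. p \<in> P \<Longrightarrow> pinv p \<in> P"
    and conj: "\<And>p t. p \<in> P \<Longrightarrow> t permutes {..<n} \<Longrightarrow> t \<circ> p \<circ> pinv t \<in> P"
    and sP: "s \<in> P" and odd: "\<not> evenperm s"
    and q: "q permutes {..<n}"
  shows "q \<in> P"
proof -
  obtain a b where ab: "a \<noteq> b" and abP: "Transposition.transpose a b \<in> P"
    using transpose_in_P[OF sub comp invc conj sP odd] by blast
  have an: "a < n" "b < n"
    using permutes_not_in[OF sub[OF abP], of a] permutes_not_in[OF sub[OF abP], of b] ab by auto
  have allT: "Transposition.transpose c d \<in> P" if cd: "c < n" "d < n" "c \<noteq> d" for c d
  proof -
    define b1 where "b1 = Transposition.transpose a c b"
    have b1n: "b1 < n" using an cd by (simp add: b1_def Transposition.transpose_def)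
    have b1c: "b1 \<noteq> c" using ab by (auto simp: b1_def Transposition.transpose_def)
    define t where "t = Transposition.transpose b1 d \<circ> Transposition.transpose a c"
    have tp: "t permutes {..<n}" unfolding t_def
      using an cd b1n by (intro permutes_compose permutes_swap_id) auto
    have ta: "t a = c" using b1c cd by (simp add: t_def)
    have tb: "t b = d" by (simp add: t_def b1_def)
    have "t \<circ> Transposition.transpose a b \<circ> pinv t = Transposition.transpose c d"
      using conj_transpose[OF tp] ta tb by simp
    with conj[OF abP tp] show ?thesis by simp
  qed
  have idP: "id \<in> P" using comp[OF sP invc[OF sP]] permutes_inv_o(1)[OF sub[OF sP]] by simp
  show ?thesis using q finite_lessThan[of n]
  proof (induction rule: permutes_induct)
    case id then show ?case using idP .
  next
    case (swap c d p)
    then show ?case using comp[OF allT[of c d] swap.IH] by (simp del: o_apply add: o_def[symmetric])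
  qed
qed



definition pv :: "nat \<Rightarrow> nat \<Rightarrow> nat \<Rightarrow> bool" where "pv a b = (\<lambda>i. i = a \<or> i = b)"

lemma move2:
  assumes "c < n" "d < n" "c \<noteq> d" "a < n" "b < n" "a \<noteq> b"
  shows "\<exists>t. t permutes {..<(n::nat)} \<and> t c = a \<and> t d = b"
proof -
  define d1 where "d1 = Transposition.transpose c a d"
  have d1n: "d1 < n" using assms by (simp add: d1_def Transposition.transpose_def)
  have d1a: "d1 \<noteq> a" using assms by (auto simp: d1_def Transposition.transpose_def)
  define t where "t = Transposition.transpose d1 b \<circ> Transposition.transpose c a"
  have tp: "t permutes {..<n}" unfolding t_def
    using assms d1n by (intro permutes_compose permutes_swap_id) auto
  have "t c = a" using d1a assms by (simp add: t_def)
  moreover have "t d = b" by (simp add: t_def d1_def)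
  ultimately show ?thesis using tp by blast
qed

lemma lemmaL:
  fixes N :: "((nat \<Rightarrow> bool) \<times> (nat \<Rightarrow> nat)) set"
  assumes Nsub: "N \<subseteq> carrier (Hn n)"
    and Nmul: "\<And>a b. a \<in> N \<Longrightarrow> b \<in> N \<Longrightarrow> a \<otimes>\<^bsub>Hn n\<^esub> b \<in> N"
    and Ninv: "\<And>a. a \<in> N \<Longrightarrow> inv\<^bsub>Hn n\<^esub> a \<in> N"
    and Nconj: "\<And>a c. a \<in> N \<Longrightarrow> c \<in> carrier (Hn n) \<Longrightarrow> c \<otimes>\<^bsub>Hn n\<^esub> a \<otimes>\<^bsub>Hn n\<^esub> inv\<^bsub>Hn n\<^esub> c \<in> N"
    and Nchi: "\<And>a. a \<in> N \<Longrightarrow> chi n a"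
    and N0: "(x0, s0) \<in> N" and odd: "\<not> evenperm s0"
    and a: "a \<in> carrier (Hn n)" and achi: "chi n a"
  shows "a \<in> N"
proof -
  interpret H: group "Hn n" by (rule Hn_group)
  have oneN: "(\<lambda>_. False, id) \<in> N" using Nmul[OF N0 Ninv[OF N0]] Nsub N0 by auto
  have s0p: "s0 permutes {..<n}" using Nsub N0 by (auto simp: Hn_carrier_iff)
  have x0c: "(x0, s0) \<in> carrier (Hn n)" using Nsub N0 by auto
  obtain c where cs: "s0 c \<noteq> c" using odd by (metis eq_id_iff evenperm_id)
  define d where "d = s0 c"
  have cn: "c < n" using permutes_not_in[OF s0p, of c] cs by auto
  have dn: "d < n" using permutes_in_image[OF s0p, of c] cn by (simp add: d_def)
  have cd: "c \<noteq> d" using cs d_def by simp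
  have pcd: "(pv c d, id) \<in> N"
  proof -
    define v where "v = (\<lambda>i::nat. i = c)"
    have vc: "(v, id) \<in> carrier (Hn n)" using cn by (auto simp: Hn_carrier_iff v_def)
    have "(v, id) \<otimes>\<^bsub>Hn n\<^esub> (x0, s0) \<otimes>\<^bsub>Hn n\<^esub> inv\<^bsub>Hn n\<^esub> (v, id) \<otimes>\<^bsub>Hn n\<^esub> inv\<^bsub>Hn n\<^esub> (x0, s0) \<in> N"
      using Nmul[OF Nconj[OF N0 vc] Ninv[OF N0]] .
    moreover have "(v, id) \<otimes>\<^bsub>Hn n\<^esub> (x0, s0) \<otimes>\<^bsub>Hn n\<^esub> inv\<^bsub>Hn n\<^esub> (v, id) \<otimes>\<^bsub>Hn n\<^esub> inv\<^bsub>Hn n\<^esub> (x0, s0)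
        = (\<lambda>i. v i \<noteq> v (pinv s0 i), s0 \<circ> pinv s0)"
      using Hn_inv[OF vc] Hn_inv[OF x0c] by (auto simp: permutes_inverses(1)[OF s0p] fun_eq_iff)
    moreover have "(\<lambda>i. v i \<noteq> v (pinv s0 i)) = pv c d"
    proof
      fix i
      have "pinv s0 i = c \<longleftrightarrow> i = d" using permutes_inverses[OF s0p] d_def by metis
      then show "(v i \<noteq> v (pinv s0 i)) = pv c d i" using cd by (auto simp: v_def pv_def)
    qed
    moreover have "s0 \<circ> pinv s0 = id" using permutes_inv_o(1)[OF s0p] .
    ultimately show ?thesis by simp
  qed
  have pab: "(pv a b, id) \<in> N" if ab: "a < n" "b < n" "a \<noteq> b" for a b
  proof -
    obtain t where tp: "t permutes {..<n}" and tc: "t c = a" and td: "t d = b"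
      using move2[OF cn dn cd ab] by blast
    have tc': "(\<lambda>_. False, t) \<in> carrier (Hn n)" using tp by (simp add: Hn_carrier_iff)
    have "(\<lambda>_. False, t) \<otimes>\<^bsub>Hn n\<^esub> (pv c d, id) \<otimes>\<^bsub>Hn n\<^esub> inv\<^bsub>Hn n\<^esub> (\<lambda>_. False, t) \<in> N"
      using Nconj[OF pcd tc'] .
    moreover have "(\<lambda>_. False, t) \<otimes>\<^bsub>Hn n\<^esub> (pv c d, id) \<otimes>\<^bsub>Hn n\<^esub> inv\<^bsub>Hn n\<^esub> (\<lambda>_. False, t)
       = (\<lambda>i. pv c d (pinv t i), t \<circ> pinv t)"
      using Hn_inv[OF tc'] by (simp add: o_def)
    moreover have "(\<lambda>i. pv c d (pinv t i)) = pv a b"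
    proof
      fix i
      have "pinv t i = c \<longleftrightarrow> i = a" "pinv t i = d \<longleftrightarrow> i = b"
        using permutes_inverses[OF tp] tc td by metis+
      then show "pv c d (pinv t i) = pv a b i" by (simp add: pv_def)
    qed
    moreover have "t \<circ> pinv t = id" using permutes_inv_o(1)[OF tp] .
    ultimately show ?thesis by simp
  qed
  have V0: "\<And>x. (\<forall>i. n \<le> i \<longrightarrow> \<not> x i) \<Longrightarrow> even (card {i. i < n \<and> x i}) \<Longrightarrow> (x, id) \<in> N"
  proof -
    fix x :: "nat \<Rightarrow> bool"
    show "(\<forall>i. n \<le> i \<longrightarrow> \<not> x i) \<Longrightarrow> even (card {i. i < n \<and> x i}) \<Longrightarrow> (x, id) \<in> N"
    proof (induction "card {i. i < n \<and> x i}" arbitrary: x rule: less_induct)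
      case less
      define S where "S = {i. i < n \<and> x i}"
      have fS: "finite S" by (simp add: S_def)
      show ?case
      proof (cases "S = {}")
        case True
        then have "x = (\<lambda>_. False)" using less.prems(1) by (auto simp: S_def fun_eq_iff) (meson not_le)
        then show ?thesis using oneN by simp
      next
        case False
        then obtain a where aS: "a \<in> S" by blast
        have "card S \<noteq> 1" using less.prems(2) S_def by auto
        have "S - {a} \<noteq> {}"
        proof
          assume "S - {a} = {}"
          then have "S = {a}" using aS by blast
          thus False using \<open>card S \<noteq> 1\<close> by simp
        qed
        then obtain b where bS: "b \<in> S" and ba: "b \<noteq> a" by blast
        define x' where "x' = (\<lambda>i. x i \<and> i \<noteq> a \<and> i \<noteq> b)"
        have S': "{i. i < n \<and> x' i} = S - {a, b}" by (auto simp: x'_def S_def)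
        have cS': "card {i. i < n \<and> x' i} = card S - 2"
          using S' aS bS ba fS by (simp add: card_Diff_subset)
        have cS2: "card S \<ge> 2"
        proof -
          have "{a,b} \<subseteq> S" using aS bS by auto
          then have "card {a,b} \<le> card S" using fS card_mono by blast
          thus ?thesis using ba by simp
        qed
        have "(x', id) \<in> N"
        proof (rule less.hyps)
          show "card {i. i < n \<and> x' i} < card {i. i < n \<and> x i}" using cS' cS2 S_def by simp
          show "\<forall>i. n \<le> i \<longrightarrow> \<not> x' i" using less.prems(1) by (simp add: x'_def)
          show "even (card {i. i < n \<and> x' i})" using cS' cS2 less.prems(2) S_def by simp
        qed
        moreover have "(pv a b, id) \<in> N" using pab aS bS ba by (simp add: S_def)
        ultimately have "(x', id) \<otimes>\<^bsub>Hn n\<^esub> (pv a b, id) \<in> N" using Nmul by blast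
        moreover have "(x', id) \<otimes>\<^bsub>Hn n\<^esub> (pv a b, id) = (x, id)"
          using aS bS ba by (auto simp: x'_def pv_def S_def fun_eq_iff)
        ultimately show ?thesis by simp
      qed
    qed
  qed
  define P where "P = snd ` N"
  have allP: "q \<in> P" if q: "q permutes {..<n}" for q
  proof (rule all_in_P[where s = s0])
    show "\<And>p. p \<in> P \<Longrightarrow> p permutes {..<n}" using Nsub by (auto simp: P_def Hn_carrier_iff)
    show "\<And>p q. p \<in> P \<Longrightarrow> q \<in> P \<Longrightarrow> p \<circ> q \<in> P"
    proof -
      fix p q assume "p \<in> P" "q \<in> P"
      then obtain y z where "(y,p) \<in> N" "(z,q) \<in> N" by (auto simp: P_def)
      then have "(y,p) \<otimes>\<^bsub>Hn n\<^esub> (z,q) \<in> N" using Nmul by blast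
      then show "p \<circ> q \<in> P" unfolding P_def by (simp add: image_iff) (metis snd_conv)
    qed
    show "\<And>p. p \<in> P \<Longrightarrow> pinv p \<in> P"
    proof -
      fix p assume "p \<in> P"
      then obtain y where yN: "(y,p) \<in> N" by (auto simp: P_def)
      then have "inv\<^bsub>Hn n\<^esub> (y,p) \<in> N" using Ninv by blast
      moreover have "inv\<^bsub>Hn n\<^esub> (y,p) = (y \<circ> pinv p, pinv p)" using Hn_inv yN Nsub by blast
      ultimately show "pinv p \<in> P" unfolding P_def by (metis image_eqI snd_conv)
    qed
    show "\<And>p t. p \<in> P \<Longrightarrow> t permutes {..<n} \<Longrightarrow> t \<circ> p \<circ> pinv t \<in> P"
    proof -
      fix p t assume "p \<in> P" and tp: "t permutes {..<n}"
      then obtain y where yN: "(y,p) \<in> N" by (auto simp: P_def)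
      have tc': "(\<lambda>_. False, t) \<in> carrier (Hn n)" using tp by (simp add: Hn_carrier_iff)
      have "(\<lambda>_. False, t) \<otimes>\<^bsub>Hn n\<^esub> (y,p) \<otimes>\<^bsub>Hn n\<^esub> inv\<^bsub>Hn n\<^esub> (\<lambda>_. False, t) \<in> N"
        using Nconj[OF yN tc'] .
      moreover have "snd ((\<lambda>_. False, t) \<otimes>\<^bsub>Hn n\<^esub> (y,p) \<otimes>\<^bsub>Hn n\<^esub> inv\<^bsub>Hn n\<^esub> (\<lambda>_. False, t)) = t \<circ> p \<circ> pinv t"
        using Hn_inv[OF tc'] by simp
      ultimately show "t \<circ> p \<circ> pinv t \<in> P" unfolding P_def by (metis image_eqI)
    qed
    show "s0 \<in> P" using N0 unfolding P_def by (metis image_eqI snd_conv)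
  qed (use odd q in auto)
  obtain x s where as: "a = (x,s)" by fastforce
  have sp: "s permutes {..<n}" using a as by (simp add: Hn_carrier_iff)
  obtain y where yN: "(y,s) \<in> N" using allP[OF sp] by (auto simp: P_def)
  have yc: "(y,s) \<in> carrier (Hn n)" using yN Nsub by auto
  define w where "w = a \<otimes>\<^bsub>Hn n\<^esub> inv\<^bsub>Hn n\<^esub> (y,s)"
  have wc: "w \<in> carrier (Hn n)" using a yc by (simp add: w_def)
  have wchi: "chi n w" using chi_mult[OF a H.inv_closed[OF yc]] chi_inv[OF yc] Nchi[OF yN] achi
    by (simp add: w_def)
  have wsnd: "snd w = id" using Hn_inv[OF yc] permutes_inv_o(1)[OF sp] by (simp add: w_def as)
  have "(fst w, id) \<in> N"
    using V0[of "fst w"] wc wchi wsnd by (metis Hn_carrier_iff chi_simp prod.collapse)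
  hence wN: "w \<in> N" using wsnd by (metis prod.collapse)
  have "w \<otimes>\<^bsub>Hn n\<^esub> (y,s) = a" using a yc H.r_one[OF a] by (simp add: w_def H.m_assoc del: Hn_one Hn_mult_simp)
  with Nmul[OF wN yN] show ?thesis by simp
qed



definition hom2 :: "('g, 'b) monoid_scheme \<Rightarrow> ('g \<Rightarrow> bool) \<Rightarrow> bool" where
  "hom2 G \<phi> \<longleftrightarrow> (\<forall>x\<in>carrier G. \<forall>y\<in>carrier G. \<phi> (x \<otimes>\<^bsub>G\<^esub> y) = (\<phi> x \<noteq> \<phi> y))"

lemma M_cond:
  fixes G (structure)
  assumes grp: "group G" and HG: "subgroup H G" and HM: "H <#> Mgrp G = carrier G"
    and hom: "hom2 G \<phi>" and ex: "\<exists>g\<in>carrier G. \<phi> g"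
  shows "\<exists>h\<in>H. \<phi> h"
proof (rule ccontr)
  assume nh: "\<not> (\<exists>h\<in>H. \<phi> h)"
  interpret group G by (rule grp)
  have hm: "\<And>x y. x \<in> carrier G \<Longrightarrow> y \<in> carrier G \<Longrightarrow> \<phi> (x \<otimes> y) = (\<phi> x \<noteq> \<phi> y)"
    using hom by (simp add: hom2_def)
  have p1: "\<not> \<phi> \<one>" using hm[of \<one> \<one>] by simp
  have pinv: "\<And>x. x \<in> carrier G \<Longrightarrow> \<phi> (inv x) = \<phi> x"
    using hm p1 by (metis inv_closed r_inv)
  define Kn where "Kn = {x \<in> carrier G. \<not> \<phi> x}"
  have sub: "subgroup Kn G"
    by (rule subgroupI) (auto simp: Kn_def hm pinv p1 intro!: exI[of _ \<one>])
  have nor: "Kn \<lhd> G"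
    unfolding normal_inv_iff using sub by (auto simp: Kn_def hm pinv)
  have mx: "max_normal Kn G"
    unfolding max_normal_def
  proof (intro conjI allI impI)
    show "Kn \<lhd> G" by (rule nor)
    show "Kn \<noteq> carrier G" using ex by (auto simp: Kn_def)
  next
    fix K assume KG: "K \<lhd> G" and sK: "Kn \<subseteq> K"
    show "K = Kn \<or> K = carrier G"
    proof (cases "K \<subseteq> Kn")
      case True then show ?thesis using sK by blast
    next
      case False
      then obtain k where kK: "k \<in> K" and kn: "k \<notin> Kn" by blast
      have Ksub: "subgroup K G" using KG normal_imp_subgroup by blast
      have kc: "k \<in> carrier G" using kK Ksub subgroup.subset by blast
      have pk: "\<phi> k" using kn kc by (simp add: Kn_def)
      have "carrier G \<subseteq> K"
      proof
        fix x assume xc: "x \<in> carrier G"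
        show "x \<in> K"
        proof (cases "\<phi> x")
          case False then show ?thesis using sK xc by (auto simp: Kn_def)
        next
          case True
          have "inv k \<otimes> x \<in> Kn" using xc kc True pk by (simp add: Kn_def hm pinv)
          hence "inv k \<otimes> x \<in> K" using sK by blast
          hence "k \<otimes> (inv k \<otimes> x) \<in> K" by (rule subgroup.m_closed[OF Ksub kK])
          thus ?thesis using kc xc by (simp add: m_assoc[symmetric])
        qed
      qed
      then show ?thesis using Ksub subgroup.subset by blast
    qed
  qed
  have MK: "Mgrp G \<subseteq> Kn" using mx by (auto simp: Mgrp_def)
  have HK: "H \<subseteq> Kn" using nh subgroup.subset[OF HG] by (auto simp: Kn_def)
  have "H <#> Mgrp G \<subseteq> Kn"
  proof
    fix z assume "z \<in> H <#> Mgrp G"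
    then obtain h m where "h \<in> H" "m \<in> Mgrp G" "z = h \<otimes> m" by (auto simp: set_mult_def)
    then show "z \<in> Kn" using HK MK subgroup.m_closed[OF sub] by blast
  qed
  then show False using HM ex by (auto simp: Kn_def)
qed



lemma HnI_carrierI:
  assumes "g \<in> extensional I" "\<And>i. i \<in> I \<Longrightarrow> g i \<in> carrier (Hn n)"
    "\<And>i j. i \<in> I \<Longrightarrow> j \<in> I \<Longrightarrow> chi n (g i) = chi n (g j)"
  shows "g \<in> carrier (HnI n I)"
  using assms unfolding HnI_carrier by blast

lemma HnI_mult_app: "i \<in> I \<Longrightarrow> (g \<otimes>\<^bsub>HnI n I\<^esub> h) i = g i \<otimes>\<^bsub>Hn n\<^esub> h i"
  by (simp add: HnI_mult)

lemma restrict_hom: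
  assumes "J \<subseteq> I"
  shows "group_hom (HnI n I) (HnI n J) (\<lambda>g. restrict g J)"
proof -
  have "(\<lambda>g. restrict g J) \<in> hom (HnI n I) (HnI n J)"
  proof (rule homI)
    fix g assume g: "g \<in> carrier (HnI n I)"
    show "restrict g J \<in> carrier (HnI n J)"
    proof (rule HnI_carrierI)
      show "restrict g J \<in> extensional J" by simp
      show "\<And>i. i \<in> J \<Longrightarrow> restrict g J i \<in> carrier (Hn n)" using HnI_carrierD(2)[OF g] assms by auto
      show "\<And>i j. i \<in> J \<Longrightarrow> j \<in> J \<Longrightarrow> chi n (restrict g J i) = chi n (restrict g J j)"
        using HnI_carrierD(3)[OF g] assms by (simp add: subset_iff)
    qed
  next
    fix x y assume "x \<in> carrier (HnI n I)" "y \<in> carrier (HnI n I)"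
    show "restrict (x \<otimes>\<^bsub>HnI n I\<^esub> y) J = restrict x J \<otimes>\<^bsub>HnI n J\<^esub> restrict y J"
      using assms by (auto simp: HnI_mult fun_eq_iff restrict_def simp del: Hn_mult_simp)
  qed
  then show ?thesis by (simp add: group_hom_def group_hom_axioms_def HnI_group)
qed

lemma main_ind:
  assumes n2: "2 \<le> n" and fin: "finite I" and ne: "I \<noteq> {}"
  shows "\<forall>H. subgroup H (HnI n I) \<longrightarrow> (\<forall>i\<in>I. (\<lambda>g. g i) ` H = carrier (Hn n)) \<longrightarrow>
     (\<forall>\<phi>. hom2 (HnI n I) \<phi> \<longrightarrow> (\<exists>g\<in>carrier (HnI n I). \<phi> g) \<longrightarrow> (\<exists>h\<in>H. \<phi> h)) \<longrightarrow>
     H = carrier (HnI n I)"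
  using fin ne
proof (induction I rule: finite_ne_induct)
  case (singleton i)
  show ?case
  proof (intro allI impI)
    fix H assume HG: "subgroup H (HnI n {i})" and pr: "\<forall>j\<in>{i}. (\<lambda>g. g j) ` H = carrier (Hn n)"
    show "H = carrier (HnI n {i})"
    proof
      show "H \<subseteq> carrier (HnI n {i})" using subgroup.subset[OF HG] .
      show "carrier (HnI n {i}) \<subseteq> H"
      proof
        fix g assume g: "g \<in> carrier (HnI n {i})"
        have "g i \<in> carrier (Hn n)" using HnI_carrierD(2)[OF g] by simp
        then obtain h where hH: "h \<in> H" and hi: "h i = g i" using pr by force
        have hc: "h \<in> carrier (HnI n {i})" using hH subgroup.subset[OF HG] by blast
        have "h = g"
          using HnI_carrierD(1)[OF hc] HnI_carrierD(1)[OF g] hi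
          by (metis extensionalityI singletonD)
        then show "g \<in> H" using hH by simp
      qed
    qed
  qed
next
  case (insert i J)
  let ?I = "insert i J"
  let ?G = "HnI n ?I"
  let ?GJ = "HnI n J"
  interpret G: group ?G by (rule HnI_group)
  interpret GJ: group ?GJ by (rule HnI_group)
  interpret Hn: group "Hn n" by (rule Hn_group)
  have JI: "J \<subseteq> ?I" by blast
  interpret R: group_hom ?G ?GJ "\<lambda>g. restrict g J" by (rule restrict_hom[OF JI])
  have r_one': "\<And>x. x \<in> carrier (Hn n) \<Longrightarrow> x \<otimes>\<^bsub>Hn n\<^esub> (\<lambda>_. False, id) = x" using Hn.r_one by simp
  have l_one': "\<And>x. x \<in> carrier (Hn n) \<Longrightarrow> (\<lambda>_. False, id) \<otimes>\<^bsub>Hn n\<^esub> x = x" using Hn.l_one by simp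
  have r_inv': "\<And>x. x \<in> carrier (Hn n) \<Longrightarrow> x \<otimes>\<^bsub>Hn n\<^esub> inv\<^bsub>Hn n\<^esub> x = (\<lambda>_. False, id)" using Hn.r_inv by simp
  have l_inv': "\<And>x. x \<in> carrier (Hn n) \<Longrightarrow> inv\<^bsub>Hn n\<^esub> x \<otimes>\<^bsub>Hn n\<^esub> x = (\<lambda>_. False, id)" using Hn.l_inv by simp
  have inv_one': "inv\<^bsub>Hn n\<^esub> (\<lambda>_. False, id) = (\<lambda>_. False, id)" using Hn.inv_one by simp
  have one_c: "(\<lambda>_. False, id) \<in> carrier (Hn n)" using Hn.one_closed by simp
  have chi_F: "\<And>t. chi n (\<lambda>_. False, t) = True" by (simp add: chi_def)
  show ?case
  proof (intro allI impI)
    fix H assume HG: "subgroup H ?G" and pr: "\<forall>j\<in>?I. (\<lambda>g. g j) ` H = carrier (Hn n)"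
      and hyp: "\<forall>\<phi>. hom2 ?G \<phi> \<longrightarrow> (\<exists>g\<in>carrier ?G. \<phi> g) \<longrightarrow> (\<exists>h\<in>H. \<phi> h)"
    have Hc: "\<And>h. h \<in> H \<Longrightarrow> h \<in> carrier ?G" using subgroup.subset[OF HG] by blast
    obtain j0 where j0: "j0 \<in> J" using insert.hyps(2) by blast
    have ij0: "i \<noteq> j0" using j0 insert.hyps(3) by blast
    have iJ: "i \<notin> J" using insert.hyps(3) .
    define K where "K = (\<lambda>g. restrict g J) ` H"
    have extg: "(\<lambda>j\<in>?I. if j = i then b j0 else b j) \<in> carrier ?G \<and> restrict (\<lambda>j\<in>?I. if j = i then b j0 else b j) J = b"
      if b: "b \<in> carrier ?GJ" for b
    proof
      show "(\<lambda>j\<in>?I. if j = i then b j0 else b j) \<in> carrier ?G"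
      proof (rule HnI_carrierI)
        show "(\<lambda>j\<in>?I. if j = i then b j0 else b j) \<in> extensional ?I" by simp
        show "\<And>j. j \<in> ?I \<Longrightarrow> (\<lambda>j\<in>?I. if j = i then b j0 else b j) j \<in> carrier (Hn n)"
          using HnI_carrierD(2)[OF b] j0 by auto
        have cj: "chi n ((\<lambda>j\<in>?I. if j = i then b j0 else b j) j) = chi n (b j0)" if j: "j \<in> ?I" for j
        proof (cases "j = i")
          case True then show ?thesis by simp
        next
          case False then have "j \<in> J" using j by simp
          then show ?thesis using HnI_carrierD(3)[OF b _ j0] False by simp
        qed
        fix j k assume "j \<in> ?I" "k \<in> ?I"
        then show "chi n ((\<lambda>j\<in>?I. if j = i then b j0 else b j) j) = chi n ((\<lambda>j\<in>?I. if j = i then b j0 else b j) k)"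
          using cj by (simp only:)
      qed
      show "restrict (\<lambda>j\<in>?I. if j = i then b j0 else b j) J = b"
      proof
        fix x show "restrict (\<lambda>j\<in>?I. if j = i then b j0 else b j) J x = b x"
        proof (cases "x \<in> J")
          case True then show ?thesis using iJ by auto
        next
          case False then show ?thesis using HnI_carrierD(1)[OF b] by (simp add: extensional_def)
        qed
      qed
    qed
    have KJ: "K = carrier ?GJ"
    proof -
      have "subgroup K ?GJ" unfolding K_def by (rule R.subgroup_img_is_subgroup[OF HG])
      moreover have "\<forall>j\<in>J. (\<lambda>g. g j) ` K = carrier (Hn n)"
      proof
        fix j assume j: "j \<in> J"
        have "(\<lambda>g. g j) ` K = (\<lambda>h. h j) ` H" unfolding K_def image_image using j by simp
        then show "(\<lambda>g. g j) ` K = carrier (Hn n)" using pr j by simp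
      qed
      moreover have "\<forall>\<phi>. hom2 ?GJ \<phi> \<longrightarrow> (\<exists>g\<in>carrier ?GJ. \<phi> g) \<longrightarrow> (\<exists>h\<in>K. \<phi> h)"
      proof (intro allI impI)
        fix \<phi> assume h\<phi>: "hom2 ?GJ \<phi>" and ex\<phi>: "\<exists>g\<in>carrier ?GJ. \<phi> g"
        have "hom2 ?G (\<lambda>g. \<phi> (restrict g J))"
          unfolding hom2_def
        proof (intro ballI)
          fix x y assume x: "x \<in> carrier ?G" and y: "y \<in> carrier ?G"
          show "\<phi> (restrict (x \<otimes>\<^bsub>?G\<^esub> y) J) = (\<phi> (restrict x J) \<noteq> \<phi> (restrict y J))"
            using R.hom_mult[OF x y] R.hom_closed[OF x] R.hom_closed[OF y] h\<phi> by (simp add: hom2_def)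
        qed
        moreover from ex\<phi> obtain b where b: "b \<in> carrier ?GJ" "\<phi> b" by blast
        ultimately obtain h where "h \<in> H" "\<phi> (restrict h J)"
          using hyp extg[OF b(1)] by (metis (no_types, lifting))
        thus "\<exists>h\<in>K. \<phi> h" by (auto simp: K_def)
      qed
      ultimately show ?thesis using insert.IH[THEN spec, of K] by blast
    qed
    define e where "e = (\<lambda>a. \<lambda>j\<in>?I. if j = i then a else (\<lambda>_::nat. False, id::nat\<Rightarrow>nat))"
    define N where "N = {a \<in> carrier (Hn n). e a \<in> H}"
    have emul: "e a \<otimes>\<^bsub>?G\<^esub> e b = e (a \<otimes>\<^bsub>Hn n\<^esub> b)" for a b
      unfolding HnI_mult e_def by (rule ext) (auto simp: restrict_def)
    have ec: "\<And>a. a \<in> N \<Longrightarrow> e a \<in> carrier ?G" using Hc by (auto simp: N_def)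
    have einv: "inv\<^bsub>?G\<^esub> (e a) = e (inv\<^bsub>Hn n\<^esub> a)" if a: "a \<in> N" for a
    proof (rule extensionalityI[of _ ?I])
      show "inv\<^bsub>?G\<^esub> (e a) \<in> extensional ?I" using HnI_carrierD(1)[OF G.inv_closed[OF ec[OF a]]] .
      show "e (inv\<^bsub>Hn n\<^esub> a) \<in> extensional ?I" by (simp add: e_def)
      fix j assume j: "j \<in> ?I"
      show "(inv\<^bsub>?G\<^esub> (e a)) j = e (inv\<^bsub>Hn n\<^esub> a) j"
        using HnI_inv_app[OF ec[OF a] j] j inv_one' by (simp add: e_def)
    qed
    have Nsub: "N \<subseteq> carrier (Hn n)" by (auto simp: N_def)
    have Nmul: "\<And>a b. a \<in> N \<Longrightarrow> b \<in> N \<Longrightarrow> a \<otimes>\<^bsub>Hn n\<^esub> b \<in> N"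
    proof -
      fix a b assume a: "a \<in> N" and b: "b \<in> N"
      have "e a \<otimes>\<^bsub>?G\<^esub> e b \<in> H" using subgroup.m_closed[OF HG] a b by (simp add: N_def)
      then show "a \<otimes>\<^bsub>Hn n\<^esub> b \<in> N" using a b by (simp add: N_def emul)
    qed
    have Ninv: "\<And>a. a \<in> N \<Longrightarrow> inv\<^bsub>Hn n\<^esub> a \<in> N"
    proof -
      fix a assume a: "a \<in> N"
      have "inv\<^bsub>?G\<^esub> (e a) \<in> H" using subgroup.m_inv_closed[OF HG] a by (simp add: N_def)
      then show "inv\<^bsub>Hn n\<^esub> a \<in> N" using a by (simp add: N_def einv)
    qed
    have Nconj: "\<And>a c. a \<in> N \<Longrightarrow> c \<in> carrier (Hn n) \<Longrightarrow> c \<otimes>\<^bsub>Hn n\<^esub> a \<otimes>\<^bsub>Hn n\<^esub> inv\<^bsub>Hn n\<^esub> c \<in> N"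
    proof -
      fix a c assume a: "a \<in> N" and c: "c \<in> carrier (Hn n)"
      obtain h where hH: "h \<in> H" and hi: "h i = c" using pr c by force
      have hc: "h \<in> carrier ?G" using Hc[OF hH] .
      have ac: "a \<in> carrier (Hn n)" using a by (simp add: N_def)
      have "h \<otimes>\<^bsub>?G\<^esub> e a \<otimes>\<^bsub>?G\<^esub> inv\<^bsub>?G\<^esub> h \<in> H"
        using subgroup.m_closed[OF HG] subgroup.m_inv_closed[OF HG] hH a by (simp add: N_def)
      moreover have "h \<otimes>\<^bsub>?G\<^esub> e a \<otimes>\<^bsub>?G\<^esub> inv\<^bsub>?G\<^esub> h = e (c \<otimes>\<^bsub>Hn n\<^esub> a \<otimes>\<^bsub>Hn n\<^esub> inv\<^bsub>Hn n\<^esub> c)"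
      proof (rule ext)
        fix j
        show "(h \<otimes>\<^bsub>?G\<^esub> e a \<otimes>\<^bsub>?G\<^esub> inv\<^bsub>?G\<^esub> h) j = e (c \<otimes>\<^bsub>Hn n\<^esub> a \<otimes>\<^bsub>Hn n\<^esub> inv\<^bsub>Hn n\<^esub> c) j"
        proof (cases "j \<in> ?I")
          case True
          have hj: "h j \<in> carrier (Hn n)" using HnI_carrierD(2)[OF hc True] .
          show ?thesis
            using True HnI_inv_app[OF hc True] hi r_one'[OF hj] r_inv'[OF hj]
            by (simp add: HnI_mult_app e_def)
        next
          case False
          then show ?thesis by (simp add: HnI_mult e_def)
        qed
      qed
      ultimately show "c \<otimes>\<^bsub>Hn n\<^esub> a \<otimes>\<^bsub>Hn n\<^esub> inv\<^bsub>Hn n\<^esub> c \<in> N"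
        using ac c by (simp add: N_def)
    qed
    have Nchi: "\<And>a. a \<in> N \<Longrightarrow> chi n a"
    proof -
      fix a assume a: "a \<in> N"
      have "chi n (e a i) = chi n (e a j0)" using HnI_carrierD(3)[OF ec[OF a], of i j0] j0 by simp
      then show "chi n a" using ij0 j0 by (simp add: e_def)
    qed
    have snd_perm: "\<And>a. a \<in> carrier (Hn n) \<Longrightarrow> snd a permutes {..<n}"
      by (metis Hn_carrier_iff prod.collapse)
    have sp: "\<And>a. a \<in> carrier (Hn n) \<Longrightarrow> permutation (snd a)" using perm_permutation snd_perm by blast
    have snd_mul: "\<And>a b. snd (a \<otimes>\<^bsub>Hn n\<^esub> b) = snd a \<circ> snd b" by (simp add: Hn_def Hn_mult_def)
    have snd_inv: "\<And>a. a \<in> carrier (Hn n) \<Longrightarrow> snd (inv\<^bsub>Hn n\<^esub> a) = pinv (snd a)"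
      using Hn_inv by (metis prod.collapse snd_conv)
    have odd: "\<exists>a\<in>N. \<not> evenperm (snd a)"
    proof (rule ccontr)
      assume "\<not> (\<exists>a\<in>N. \<not> evenperm (snd a))"
      hence allev: "\<And>a. a \<in> N \<Longrightarrow> evenperm (snd a)" by blast
      have W: "evenperm (snd (h i)) = evenperm (snd (h' i))"
        if hH: "h \<in> H" and hH': "h' \<in> H" and rr: "restrict h J = restrict h' J" for h h'
      proof -
        define q where "q = inv\<^bsub>?G\<^esub> h \<otimes>\<^bsub>?G\<^esub> h'"
        have qH: "q \<in> H" unfolding q_def using subgroup.m_closed[OF HG subgroup.m_inv_closed[OF HG hH] hH'] .
        have hc: "h \<in> carrier ?G" and hc': "h' \<in> carrier ?G" using Hc hH hH' by auto
        have qc: "q \<in> carrier ?G" using Hc[OF qH] .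
        have iI: "i \<in> ?I" by simp
        have hic: "h i \<in> carrier (Hn n)" "h' i \<in> carrier (Hn n)"
          using HnI_carrierD(2)[OF hc iI] HnI_carrierD(2)[OF hc' iI] by auto
        have qi: "q i = inv\<^bsub>Hn n\<^esub> (h i) \<otimes>\<^bsub>Hn n\<^esub> h' i"
          unfolding q_def using HnI_inv_app[OF hc iI] by (simp add: HnI_mult_app)
        have qe: "q = e (q i)"
        proof (rule extensionalityI[of _ ?I])
          show "q \<in> extensional ?I" using HnI_carrierD(1)[OF qc] .
          show "e (q i) \<in> extensional ?I" by (simp add: e_def)
          fix j assume j: "j \<in> ?I"
          show "q j = e (q i) j"
          proof (cases "j = i")
            case True then show ?thesis by (simp add: e_def)
          next
            case False
            then have jJ: "j \<in> J" using j by simp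
            have "h j = h' j" using rr jJ by (metis restrict_apply')
            moreover have "h j \<in> carrier (Hn n)" using HnI_carrierD(2)[OF hc] j by simp
            ultimately have "q j = (\<lambda>_. False, id)"
              unfolding q_def using HnI_inv_app[OF hc j] j l_inv' by (simp add: HnI_mult_app)
            then show ?thesis using False j by (simp add: e_def)
          qed
        qed
        have "q i \<in> N" using qH qe Hn.m_closed[OF Hn.inv_closed[OF hic(1)] hic(2)] qi
          by (simp add: N_def)
        then have "evenperm (snd (q i))" by (rule allev)
        moreover have "snd (q i) = pinv (snd (h i)) \<circ> snd (h' i)" using qi snd_mul snd_inv[OF hic(1)] by simp
        moreover have "permutation (pinv (snd (h i)))" "permutation (snd (h' i))" "permutation (snd (h i))"
          using perm_permutation permutes_inv snd_perm hic by blast+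
        ultimately show ?thesis using evenperm_comp evenperm_inv by metis
      qed
      define F where "F b = (\<exists>h\<in>H. restrict h J = b \<and> \<not> evenperm (snd (h i)))" for b
      have FE: "\<And>h. h \<in> H \<Longrightarrow> F (restrict h J) = (\<not> evenperm (snd (h i)))"
        using W unfolding F_def by blast
      define \<psi> where "\<psi> g = ((\<not> evenperm (snd (g i))) \<noteq> F (restrict g J))" for g
      have hom: "hom2 ?G \<psi>"
        unfolding hom2_def
      proof (intro ballI)
        fix x y assume x: "x \<in> carrier ?G" and y: "y \<in> carrier ?G"
        obtain hx where hx: "hx \<in> H" "restrict hx J = restrict x J"
          using R.hom_closed[OF x] KJ unfolding K_def by (metis imageE)
        obtain hy where hy: "hy \<in> H" "restrict hy J = restrict y J"
          using R.hom_closed[OF y] KJ unfolding K_def by (metis imageE)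
        have hxy: "hx \<otimes>\<^bsub>?G\<^esub> hy \<in> H" using subgroup.m_closed[OF HG hx(1) hy(1)] .
        have "restrict (x \<otimes>\<^bsub>?G\<^esub> y) J = restrict (hx \<otimes>\<^bsub>?G\<^esub> hy) J"
          using R.hom_mult[OF x y] R.hom_mult[OF Hc[OF hx(1)] Hc[OF hy(1)]] hx(2) hy(2) by simp
        hence "F (restrict (x \<otimes>\<^bsub>?G\<^esub> y) J) = (\<not> evenperm (snd ((hx \<otimes>\<^bsub>?G\<^esub> hy) i)))" using FE[OF hxy] by simp
        also have "\<dots> = (\<not> evenperm (snd (hx i) \<circ> snd (hy i)))" by (simp add: HnI_mult_app snd_mul)
        also have "\<dots> = (F (restrict x J) \<noteq> F (restrict y J))"
        proof -
          have "permutation (snd (hx i))" "permutation (snd (hy i))"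
            using sp[OF HnI_carrierD(2)[OF Hc[OF hx(1)], of i]] sp[OF HnI_carrierD(2)[OF Hc[OF hy(1)], of i]] by simp_all
          then show ?thesis using evenperm_comp FE[OF hx(1)] FE[OF hy(1)] hx(2) hy(2) by auto
        qed
        finally have Fxy: "F (restrict (x \<otimes>\<^bsub>?G\<^esub> y) J) = (F (restrict x J) \<noteq> F (restrict y J))" .
        have "permutation (snd (x i))" "permutation (snd (y i))"
          using sp[OF HnI_carrierD(2)[OF x, of i]] sp[OF HnI_carrierD(2)[OF y, of i]] by simp_all
        then have "evenperm (snd ((x \<otimes>\<^bsub>?G\<^esub> y) i)) = (evenperm (snd (x i)) = evenperm (snd (y i)))"
          using evenperm_comp by (simp add: HnI_mult_app snd_mul)
        then show "\<psi> (x \<otimes>\<^bsub>?G\<^esub> y) = (\<psi> x \<noteq> \<psi> y)" using Fxy by (auto simp: \<psi>_def)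
      qed
      define g0 where "g0 = e (\<lambda>_. False, Transposition.transpose 0 1)"
      have tc: "(\<lambda>_. False, Transposition.transpose 0 1) \<in> carrier (Hn n)"
        using n2 by (simp add: Hn_carrier_iff permutes_swap_id)
      have g0c: "g0 \<in> carrier ?G"
      proof (rule HnI_carrierI)
        show "g0 \<in> extensional ?I" by (simp add: g0_def e_def)
        show "\<And>j. j \<in> ?I \<Longrightarrow> g0 j \<in> carrier (Hn n)" using tc one_c by (simp add: g0_def e_def)
        show "\<And>j k. j \<in> ?I \<Longrightarrow> k \<in> ?I \<Longrightarrow> chi n (g0 j) = chi n (g0 k)"
          by (simp add: g0_def e_def chi_F)
      qed
      have r1: "restrict g0 J = restrict \<one>\<^bsub>?G\<^esub> J"
        using iJ by (auto simp: g0_def e_def HnI_one fun_eq_iff restrict_def)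
      have o1: "\<one>\<^bsub>?G\<^esub> \<in> H" using subgroup.one_closed[OF HG] .
      have "F (restrict g0 J) = (\<not> evenperm (snd (\<one>\<^bsub>?G\<^esub> i)))" using FE[OF o1] r1 by (simp only:)
      moreover have "\<one>\<^bsub>?G\<^esub> i = (\<lambda>_. False, id)" by (simp add: HnI_one)
      ultimately have "F (restrict g0 J) = False" by simp
      moreover have "g0 i = (\<lambda>_. False, Transposition.transpose 0 1)" by (simp add: g0_def e_def)
      ultimately have "\<psi> g0" by (simp add: \<psi>_def evenperm_swap)
      then obtain h where hH: "h \<in> H" and "\<psi> h" using hyp hom g0c by blast
      then show False using FE[OF hH] by (simp add: \<psi>_def)
    qed
    then obtain a0 where a0N: "a0 \<in> N" and a0o: "\<not> evenperm (snd a0)" by blast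
    have AN: "\<And>a. a \<in> carrier (Hn n) \<Longrightarrow> chi n a \<Longrightarrow> a \<in> N"
      using lemmaL[OF Nsub Nmul Ninv Nconj Nchi, of "fst a0" "snd a0"] a0N a0o by simp
    show "H = carrier ?G"
    proof
      show "H \<subseteq> carrier ?G" using Hc by blast
      show "carrier ?G \<subseteq> H"
      proof
        fix g assume g: "g \<in> carrier ?G"
        obtain h where hH: "h \<in> H" and rr: "restrict h J = restrict g J"
          using R.hom_closed[OF g] KJ unfolding K_def by (metis imageE)
        have hc: "h \<in> carrier ?G" using Hc[OF hH] .
        have iI: "i \<in> ?I" by simp
        have hj: "\<And>j. j \<in> J \<Longrightarrow> h j = g j" using rr by (metis restrict_apply')
        have hic: "h i \<in> carrier (Hn n)" and gic: "g i \<in> carrier (Hn n)"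
          using HnI_carrierD(2)[OF hc iI] HnI_carrierD(2)[OF g iI] by auto
        define c where "c = inv\<^bsub>Hn n\<^esub> (h i) \<otimes>\<^bsub>Hn n\<^esub> g i"
        have cc: "c \<in> carrier (Hn n)" using hic gic by (simp add: c_def)
        have "chi n (h i) = chi n (g i)"
          using HnI_carrierD(3)[OF hc iI, of j0] HnI_carrierD(3)[OF g iI, of j0] hj[OF j0] j0 by simp
        hence "chi n c" using chi_mult[OF Hn.inv_closed[OF hic] gic] chi_inv[OF hic] by (simp add: c_def)
        hence "c \<in> N" using AN cc by blast
        hence ecH: "e c \<in> H" by (simp add: N_def)
        have "h \<otimes>\<^bsub>?G\<^esub> e c = g"
        proof (rule extensionalityI[of _ ?I])
          show "h \<otimes>\<^bsub>?G\<^esub> e c \<in> extensional ?I" by (simp add: HnI_mult)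
          show "g \<in> extensional ?I" using HnI_carrierD(1)[OF g] .
          fix j assume j: "j \<in> ?I"
          show "(h \<otimes>\<^bsub>?G\<^esub> e c) j = g j"
          proof (cases "j = i")
            case True
            then show ?thesis using hic gic
              by (simp add: HnI_mult_app e_def c_def Hn.m_assoc[symmetric] r_inv' l_one')
          next
            case False
            then have jJ: "j \<in> J" using j by simp
            have "h j \<in> carrier (Hn n)" using HnI_carrierD(2)[OF hc j] .
            then show ?thesis using False j hj[OF jJ] r_one' by (simp add: HnI_mult_app e_def)
          qed
        qed
        then show "g \<in> H" using subgroup.m_closed[OF HG hH ecH] by simp
      qed
    qed
  qed
qed


theorem mainTheorem16:
  fixes n :: nat and I :: "'a set"
    and H :: "('a \<Rightarrow> (nat \<Rightarrow> bool) \<times> (nat \<Rightarrow> nat)) set"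
  assumes "3 \<le> n" and "finite I" and "I \<noteq> {}"
    and "subgroup H (HnI n I)"
    and "H <#>\<^bsub>HnI n I\<^esub> Mgrp (HnI n I) = carrier (HnI n I)"
    and "\<forall>i\<in>I. (\<lambda>g. g i) ` H = carrier (Hn n)"
  shows "H = carrier (HnI n I)"
proof -
  have n2: "2 \<le> n" using assms(1) by simp
  have "\<forall>\<phi>. hom2 (HnI n I) \<phi> \<longrightarrow> (\<exists>g\<in>carrier (HnI n I). \<phi> g) \<longrightarrow> (\<exists>h\<in>H. \<phi> h)"
    using M_cond[OF HnI_group assms(4) assms(5)] by blast
  then show ?thesis using main_ind[OF n2 assms(2) assms(3)] assms(4) assms(6) by blast
qed

end
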